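(* Let $n\ge 4$ with $n\equiv 2\pmod 6$, and let $G=P_4\cup P_{n-4}$ (disjoint union of a path on $4$ vertices and a path on $n-4$ vertices). Then $\operatorname{rank}(A_G+I_n)=\operatorname{rank}(A_{\overline G}+I_n)=n$.
   Context: All graphs are simple. $P_m$ is the path on $m$ vertices and $\cup$ denotes disjoint union of graphs. $A_G$ denotes the $n\times n$ adjacency matrix of $G$, $\overline{G}$ the complement of $G$, $I_n$ the identity matrix, and rank is over $\mathbb{R}$. *)

theory Defs
  imports "Jordan_Normal_Form.DL_Rank"
begin

text \<open>Simple graphs on the vertex set {0..<n} are given by a symmetric irreflexive
  edge relation E :: nat \<Rightarrow> nat \<Rightarrow> bool (only its restriction to {0..<n} matters).\<close>

definition path_edges :: "nat \<Rightarrow> nat \<Rightarrow> nat \<Rightarrow> nat \<Rightarrow> bool" where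
  "path_edges a b i j \<longleftrightarrow> a \<le> i \<and> i < b \<and> a \<le> j \<and> j < b \<and> (i = j + 1 \<or> j = i + 1)"

text \<open>Disjoint union of graphs living on disjoint vertex sets.\<close>
definition graph_union :: "(nat \<Rightarrow> nat \<Rightarrow> bool) \<Rightarrow> (nat \<Rightarrow> nat \<Rightarrow> bool) \<Rightarrow> nat \<Rightarrow> nat \<Rightarrow> bool" where
  "graph_union E F i j \<longleftrightarrow> E i j \<or> F i j"

definition P4_union_path :: "nat \<Rightarrow> nat \<Rightarrow> nat \<Rightarrow> bool" where
  "P4_union_path n = graph_union (path_edges 0 4) (path_edges 4 n)"

definition graph_complement :: "(nat \<Rightarrow> nat \<Rightarrow> bool) \<Rightarrow> nat \<Rightarrow> nat \<Rightarrow> bool" where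
  "graph_complement E i j \<longleftrightarrow> i \<noteq> j \<and> \<not> E i j"

definition adj_matrix :: "nat \<Rightarrow> (nat \<Rightarrow> nat \<Rightarrow> bool) \<Rightarrow> real mat" where
  "adj_matrix n E = mat n n (\<lambda>(i, j). if E i j then 1 else 0)"

definition real_rank :: "nat \<Rightarrow> real mat \<Rightarrow> nat" where
  "real_rank n A = vec_space.rank n A"

end

theory Submission
  imports Defs
begin

lemma rank_full:
  fixes A :: "real mat"
  assumes A: "A \<in> carrier_mat n n"
    and K: "\<And>v. v \<in> carrier_vec n \<Longrightarrow> A *\<^sub>v v = 0\<^sub>v n \<Longrightarrow> v = 0\<^sub>v n"
  shows "real_rank n A = n"
proof -
  have "det A \<noteq> 0" using det_0_iff_vec_prod_zero_field[OF A] K by auto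
  then show ?thesis unfolding real_rank_def using vec_space.low_rank_det_zero[OF A] by blast
qed

definition nb :: "nat \<Rightarrow> nat \<Rightarrow> nat set" where
  "nb n i = {j. j < n \<and> P4_union_path n i j}"

lemma row1:
  assumes "v \<in> carrier_vec n" "i < n"
  shows "((adj_matrix n (P4_union_path n) + 1\<^sub>m n) *\<^sub>v v) $ i = v $ i + sum (($) v) (nb n i)"
proof -
  have "((adj_matrix n (P4_union_path n) + 1\<^sub>m n) *\<^sub>v v) $ i
     = (\<Sum>j<n. ((if P4_union_path n i j then 1 else 0) + (if i = j then 1 else 0)) * v $ j)"
    using assms by (auto simp: adj_matrix_def scalar_prod_def atLeast0LessThan intro!: sum.cong)
  also have "\<dots> = (\<Sum>j<n. (if P4_union_path n i j then v $ j else 0)) + (\<Sum>j<n. (if i = j then v $ j else 0))"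
    by (subst sum.distrib[symmetric], rule sum.cong) auto
  also have "\<dots> = sum (($) v) (nb n i) + v $ i"
    using assms by (simp add: sum.inter_filter[symmetric] nb_def)
  finally show ?thesis by simp
qed

lemma row2:
  assumes "v \<in> carrier_vec n" "i < n"
  shows "((adj_matrix n (graph_complement (P4_union_path n)) + 1\<^sub>m n) *\<^sub>v v) $ i = (\<Sum>j<n. v $ j) - sum (($) v) (nb n i)"
proof -
  have irr: "\<not> P4_union_path n i i" by (simp add: P4_union_path_def graph_union_def path_edges_def)
  have "((adj_matrix n (graph_complement (P4_union_path n)) + 1\<^sub>m n) *\<^sub>v v) $ i
     = (\<Sum>j<n. (1 - (if P4_union_path n i j then 1 else 0)) * v $ j)"
    using assms irr by (auto simp: adj_matrix_def graph_complement_def scalar_prod_def atLeast0LessThan intro!: sum.cong)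
  also have "\<dots> = (\<Sum>j<n. v $ j) - (\<Sum>j<n. (if P4_union_path n i j then v $ j else 0))"
    by (subst sum_subtractf[symmetric], rule sum.cong) auto
  also have "\<dots> = (\<Sum>j<n. v $ j) - sum (($) v) (nb n i)"
    using assms by (simp add: sum.inter_filter[symmetric] nb_def)
  finally show ?thesis .
qed

lemma nb_facts:
  assumes "n \<ge> 8"
  shows "nb n 0 = {1}" "nb n 1 = {0,2}" "nb n 2 = {1,3}" "nb n 3 = {2}" "nb n 4 = {5}"
    "nb n (n-1) = {n-2}"
    "\<And>i. 4 < i \<Longrightarrow> i + 1 < n \<Longrightarrow> nb n i = {i-1, i+1}"
  using assms by (auto simp: nb_def P4_union_path_def graph_union_def path_edges_def)

lemma sum_split4: "(\<Sum>j<4+(m::nat). h j) = (\<Sum>j<4. (h j::real)) + (\<Sum>k<m. h (4+k))"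
proof (induct m)
  case (Suc m)
  have "(\<Sum>j<4+Suc m. h j) = (\<Sum>j<4+m. h j) + h (4+m)"
    using sum.lessThan_Suc[of h "4+m"] by simp
  then show ?case using Suc by simp
qed simp

lemma nb_int: "4 \<le> j \<Longrightarrow> j + 2 < n \<Longrightarrow> nb n (j+1) = {j, j+2}"
  by (auto simp: nb_def P4_union_path_def graph_union_def path_edges_def)

lemma ker1:
  assumes q: "n = 6*q+8" and v: "v \<in> carrier_vec n"
    and z: "(adj_matrix n (P4_union_path n) + 1\<^sub>m n) *\<^sub>v v = 0\<^sub>v n"
  shows "v = 0\<^sub>v n"
proof -
  have n8: "n \<ge> 8" using q by simp
  have e: "v $ i + sum (($) v) (nb n i) = 0" if "i < n" for i
    using row1[OF v that] z that by (metis index_zero_vec(1))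
  note nbf = nb_facts[OF n8]
  have b0: "v$0 + v$1 = 0" using e[of 0] n8 nbf by simp
  have b1: "v$1 + (v$0 + v$2) = 0" using e[of 1] n8 nbf by simp
  have b2: "v$2 + (v$1 + v$3) = 0" using e[of 2] n8 nbf by simp
  have b3: "v$3 + v$2 = 0" using e[of 3] n8 nbf by simp
  have blk: "v$j = 0" if "j < 4" for j
  proof -
    have "j = 0 \<or> j = 1 \<or> j = 2 \<or> j = 3" using that by auto
    then show ?thesis using b0 b1 b2 b3 by auto
  qed
  define c :: "nat \<Rightarrow> real" where "c r = (if r = 0 then 1 else if r = 1 then -1 else 0)" for r
  have crec: "c ((k+2) mod 3) = - c (k mod 3) - c ((k+1) mod 3)" for k
  proof -
    have "k mod 3 = 0 \<or> k mod 3 = 1 \<or> k mod 3 = 2" by auto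
    then show ?thesis unfolding c_def by (auto simp: mod_Suc)
  qed
  have r4: "v$4 + v$5 = 0" using e[of 4] n8 nbf by simp
  have claim: "4+k+1 < n \<longrightarrow> v$(4+k) = c (k mod 3) * v$4 \<and> v$(4+(k+1)) = c ((k+1) mod 3) * v$4" for k
  proof (induct k)
    case 0 show ?case using r4 by (simp add: c_def)
  next
    case (Suc k)
    show ?case
    proof
      assume lt: "4 + Suc k + 1 < n"
      have IH: "v$(4+k) = c (k mod 3) * v$4" "v$(4+(k+1)) = c ((k+1) mod 3) * v$4"
        using Suc lt by auto
      have "v $ (4+k+1) + sum (($) v) (nb n (4+k+1)) = 0" using e[of "4+k+1"] lt by simp
      then have "v $ (4+k+1) + (v$(4+k) + v$(4+k+2)) = 0"
        using nb_int[of "4+k" n] lt by simp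
      then have "v$(4+(k+2)) = - c (k mod 3) * v$4 - c ((k+1) mod 3) * v$4"
        using IH by (simp add: algebra_simps)
      moreover have "c ((k+2) mod 3) * v$4 = (- c (k mod 3) - c ((k+1) mod 3)) * v$4"
        by (simp only: crec)
      ultimately have "v$(4+(k+2)) = c ((k+2) mod 3) * v$4" by (simp add: algebra_simps)
      then show "v$(4+Suc k) = c (Suc k mod 3) * v$4 \<and> v$(4+(Suc k+1)) = c ((Suc k+1) mod 3) * v$4"
        using IH by simp
    qed
  qed
  have last: "v$(n-1) + v$(n-2) = 0" using e[of "n-1"] n8 nbf by simp
  have m2: "(6*q+2) mod 3 = 2" "(6*q+3) mod 3 = 0" by presburger+
  have "v$(4+(6*q+2)) = 0 \<and> v$(4+(6*q+3)) = v$4"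
    using claim[of "6*q+2"] q m2 by (simp add: c_def)
  moreover have "n-1 = 4+(6*q+3)" "n-2 = 4+(6*q+2)" using q by simp_all
  ultimately have v4: "v$4 = 0" using last by simp
  have "v$i = 0" if "i < n" for i
  proof (cases "i < 4")
    case True then show ?thesis using blk by simp
  next
    case False
    then obtain k where k: "i = 4+k" by (metis add_diff_inverse not_less)
    show ?thesis
    proof (cases "4+k+1 < n")
      case True then show ?thesis using claim[of k] v4 k by simp
    next
      case False
      then have "k = (k-1)+1" "4+(k-1)+1 < n" using k that q by auto
      then show ?thesis using claim[of "k-1"] v4 k by (metis mult_zero_right)
    qed
  qed
  then show ?thesis using v by (intro eq_vecI) auto
qed

lemma ker2:
  assumes q: "n = 6*q+8" and v: "v \<in> carrier_vec n"
    and z: "(adj_matrix n (graph_complement (P4_union_path n)) + 1\<^sub>m n) *\<^sub>v v = 0\<^sub>v n"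
  shows "v = 0\<^sub>v n"
proof -
  have n8: "n \<ge> 8" using q by simp
  define s where "s = (\<Sum>j<n. v $ j)"
  have e: "sum (($) v) (nb n i) = s" if "i < n" for i
    using row2[OF v that] z that unfolding s_def by (metis index_zero_vec(1) eq_iff_diff_eq_0)
  note nbf = nb_facts[OF n8]
  have b0: "v$1 = s" using e[of 0] n8 nbf by simp
  have b1: "v$0 + v$2 = s" using e[of 1] n8 nbf by simp
  have b2: "v$1 + v$3 = s" using e[of 2] n8 nbf by simp
  have b3: "v$2 = s" using e[of 3] n8 nbf by simp
  define a where "a = v$4"
  define f :: "nat \<Rightarrow> real" where "f r = (if r = 0 then a else if r = 1 then s else if r = 2 then s - a else 0)" for r
  define g :: "nat \<Rightarrow> real" where "g r = (if r = 0 then 0 else if r = 1 then 2*a - s else if r = 2 then 2*a else s)" for r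
  have frec: "f ((k+2) mod 4) = s - f (k mod 4)" for k
  proof -
    have "k mod 4 = 0 \<or> k mod 4 = 1 \<or> k mod 4 = 2 \<or> k mod 4 = 3" by auto
    moreover have "(k+2) mod 4 = (k mod 4 + 2) mod 4" by presburger
    ultimately show ?thesis unfolding f_def by auto
  qed
  have grec: "g ((k+1) mod 4) = g (k mod 4) + 2 * f (k mod 4) - s" for k
  proof -
    have "k mod 4 = 0 \<or> k mod 4 = 1 \<or> k mod 4 = 2 \<or> k mod 4 = 3" by auto
    moreover have "(k+1) mod 4 = (k mod 4 + 1) mod 4" by presburger
    ultimately show ?thesis unfolding f_def g_def by auto
  qed
  have r4: "v$5 = s" using e[of 4] n8 nbf by simp
  have claim: "4+k+1 < n \<longrightarrow> v$(4+k) = f (k mod 4) \<and> v$(4+(k+1)) = f ((k+1) mod 4)" for k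
  proof (induct k)
    case 0 show ?case using r4 by (simp add: f_def a_def)
  next
    case (Suc k)
    show ?case
    proof
      assume lt: "4 + Suc k + 1 < n"
      have IH: "v$(4+k) = f (k mod 4)" "v$(4+(k+1)) = f ((k+1) mod 4)"
        using Suc lt by auto
      have "sum (($) v) (nb n (4+k+1)) = s" using e[of "4+k+1"] lt by simp
      then have "v$(4+k) + v$(4+k+2) = s"
        using nb_int[of "4+k" n] lt by simp
      then have "v$(4+(k+2)) = f ((k+2) mod 4)" using IH frec[of k] by (simp add: algebra_simps)
      then show "v$(4+Suc k) = f (Suc k mod 4) \<and> v$(4+(Suc k+1)) = f ((Suc k+1) mod 4)"
        using IH by simp
    qed
  qed
  have cl: "v$(4+k) = f (k mod 4)" if "4+k < n" for k
  proof (cases "4+k+1 < n")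
    case True then show ?thesis using claim[of k] by simp
  next
    case False
    then have "k = (k-1)+1" "4+(k-1)+1 < n" using that q by auto
    then show ?thesis using claim[of "k-1"] by metis
  qed
  have S: "k \<le> n - 4 \<longrightarrow> 2 * (\<Sum>j<k. v$(4+j)) = real k * s + g (k mod 4)" for k
  proof (induct k)
    case 0 show ?case by (simp add: g_def)
  next
    case (Suc k)
    show ?case
    proof
      assume lt: "Suc k \<le> n - 4"
      then have "2 * (\<Sum>j<k. v$(4+j)) = real k * s + g (k mod 4)" using Suc by simp
      moreover have "v$(4+k) = f (k mod 4)" using cl[of k] lt by simp
      ultimately show "2 * (\<Sum>j<Suc k. v$(4+j)) = real (Suc k) * s + g (Suc k mod 4)"
        using grec[of k] by (simp add: algebra_simps)
    qed
  qed
  have last: "v$(n-2) = s" using e[of "n-1"] n8 nbf by simp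
  have nn: "n-2 = 4+(6*q+2)" "n = 4 + (6*q+4)" "n - 4 = 6*q+4" using q by simp_all
  have tot: "s = 2*s + (\<Sum>j<6*q+4. v$(4+j))"
  proof -
    have "s = (\<Sum>j<4. v$j) + (\<Sum>j<6*q+4. v$(4+j))" unfolding s_def
      using sum_split4[of "\<lambda>j. v$j" "6*q+4"] nn(2) by simp
    moreover have "(\<Sum>j<4. v$j) = v$0 + v$1 + v$2 + v$3" by (simp add: eval_nat_numeral)
    ultimately show ?thesis using b0 b1 b2 b3 by simp
  qed
  have S2: "2 * (\<Sum>j<6*q+4. v$(4+j)) = real (6*q+4) * s + g ((6*q+4) mod 4)"
    using S[of "6*q+4"] nn by simp
  have L: "v$(4+(6*q+2)) = s" using last nn by simp
  have sa: "s = 0 \<and> a = 0"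
  proof (cases "even q")
    case True
    then have m: "(6*q+2) mod 4 = 2" "(6*q+4) mod 4 = 0" by (auto elim!: evenE) presburger+
    have "a = 0" using L cl[of "6*q+2"] q m by (simp add: f_def)
    have "(6 * real q + 6) * s = 0" using tot S2 m by (simp add: g_def algebra_simps)
    moreover have "6 * real q + 6 > 0" by simp
    ultimately have "s = 0" by simp
    then show ?thesis using \<open>a = 0\<close> by simp
  next
    case False
    then have m: "(6*q+2) mod 4 = 0" "(6*q+4) mod 4 = 2" by (auto elim!: oddE) presburger+
    have "a = s" using L cl[of "6*q+2"] q m by (simp add: f_def)
    have "(6 * real q + 8) * s = 0" using tot S2 m \<open>a = s\<close> by (simp add: g_def algebra_simps)
    moreover have "6 * real q + 8 > 0" by simp
    ultimately have "s = 0" by simp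
    then show ?thesis using \<open>a = s\<close> by simp
  qed
  have "v$i = 0" if "i < n" for i
  proof (cases "i < 4")
    case True
    then have "i = 0 \<or> i = 1 \<or> i = 2 \<or> i = 3" by auto
    then show ?thesis using b0 b1 b2 b3 sa by auto
  next
    case False
    then obtain k where k: "i = 4+k" by (metis add_diff_inverse not_less)
    have "k mod 4 = 0 \<or> k mod 4 = 1 \<or> k mod 4 = 2 \<or> k mod 4 = 3" by auto
    then show ?thesis using cl[of k] k that sa by (auto simp: f_def)
  qed
  then show ?thesis using v by (intro eq_vecI) auto
qed

theorem proposition5p7:
  fixes n :: nat
  assumes "n \<ge> 4" and "n mod 6 = 2"
  shows "real_rank n (adj_matrix n (P4_union_path n) + 1\<^sub>m n) = n
       \<and> real_rank n (adj_matrix n (graph_complement (P4_union_path n)) + 1\<^sub>m n) = n"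
proof -
  obtain q where q: "n = 6*q+8"
  proof
    show "n = 6*((n - 8) div 6) + 8" using assms by presburger
  qed
  show ?thesis
  proof
    show "real_rank n (adj_matrix n (P4_union_path n) + 1\<^sub>m n) = n"
      by (rule rank_full) (auto simp: adj_matrix_def intro: ker1[OF q])
    show "real_rank n (adj_matrix n (graph_complement (P4_union_path n)) + 1\<^sub>m n) = n"
      by (rule rank_full) (auto simp: adj_matrix_def intro: ker2[OF q])
  qed
qed

end
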